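(* Consider a CMILS instance and let $x$ satisfy $x_{s,i}\in[0,1]$ for all $i\in[N]$, $s\in[r_i]$, and $\sum_{s\in[r_i]}x_{s,i}=1$ for every $i\in[N]$. For every interval $(a,b]$ over $[T]$ define $$R_{a,b}:=\sum_{i\in[N]:\ r_i\in(a,b]}\max\Big\{1-\tfrac52x_{[a],i},\,0\Big\}d_i .$$ Let $y^*\in\{0,1\}^T$ and $S^*=\{s\in[T]:y^*_s=1\}$. If $C(S^*\cap(a,b])\ge R_{a,b}$ for every interval $(a,b]$ over $[T]$, then there exists $x^*$ such that $(x^*,y^* )$ is a feasible solution to the CMILS instance and $\mathrm{hcost}(x^* )\le\frac52\,\mathrm{hcost}(x)$.
   Context: CMILS problem: periods $[T]$, items $[N]$; item $i$ has demand $d_i>0$ due by time $r_i\in[T]$; period $s$ has ordering cost $K_s>0$ and capacity $C_s>0$; $h_i(s)\ge0$ ($s\in[r_i]$) is the per-unit holding cost of item $i$ from $s$ to $r_i$, non-increasing in $s$ with $h_i(r_i)=0$. A feasible solution is $(x,y)$ with $y\in\{0,1\}^T$, $x_{s,i}\in[0,1]$ ($i\in[N]$, $s\in[r_i]$), $\sum_{s\in[r_i]}x_{s,i}=1$ for every $i$, $x_{s,i}\le y_s$, and $\sum_{i: r_i\ge s}x_{s,i}d_i\le y_sC_s$ for every $s$. Notation: $x_{s,i}=0$ for $s>r_i$; $x_{S,i}=\sum_{s\in S}x_{s,i}$ for $S\subseteq[T]$; $[a]=\{1,\dots,a\}$ ($[0]=\emptyset$); $(a,b]=\{a+1,\dots,b\}$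 and an interval over $[T]$ is $(a,b]$ with integers $0\le a<b\le T$; $C(S)=\sum_{s\in S}C_s$; $\mathrm{hcost}(x)=\sum_{i\in[N]}d_i\sum_{s\in[r_i]}x_{s,i}h_i(s)$. *)

theory Defs
  imports "HOL-Analysis.Analysis"
begin

text \<open>Periods are 1..T, items are 1..N. x s i is the fraction of item i ordered in period s.\<close>

definition cmils_instance ::
  "nat \<Rightarrow> nat \<Rightarrow> (nat \<Rightarrow> real) \<Rightarrow> (nat \<Rightarrow> nat) \<Rightarrow> (nat \<Rightarrow> real) \<Rightarrow> (nat \<Rightarrow> real)
   \<Rightarrow> (nat \<Rightarrow> nat \<Rightarrow> real) \<Rightarrow> bool" where
  "cmils_instance T N d r K C h \<longleftrightarrow>
     (\<forall>i\<in>{1..N}. d i > 0 \<and> r i \<in> {1..T}) \<and>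
     (\<forall>s\<in>{1..T}. K s > 0 \<and> C s > 0) \<and>
     (\<forall>i\<in>{1..N}. (\<forall>s\<in>{1..r i}. h i s \<ge> 0) \<and>
        (\<forall>s\<in>{1..r i}. \<forall>s'\<in>{1..r i}. s \<le> s' \<longrightarrow> h i s' \<le> h i s) \<and>
        h i (r i) = 0)"

definition frac_assignment :: "nat \<Rightarrow> (nat \<Rightarrow> nat) \<Rightarrow> (nat \<Rightarrow> nat \<Rightarrow> real) \<Rightarrow> bool" where
  "frac_assignment N r x \<longleftrightarrow>
     (\<forall>i\<in>{1..N}. (\<forall>s\<in>{1..r i}. 0 \<le> x s i \<and> x s i \<le> 1) \<and> (\<Sum>s\<in>{1..r i}. x s i) = 1)"

definition cmils_feasible ::
  "nat \<Rightarrow> nat \<Rightarrow> (nat \<Rightarrow> real) \<Rightarrow> (nat \<Rightarrow> nat) \<Rightarrow> (nat \<Rightarrow> real)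
   \<Rightarrow> (nat \<Rightarrow> nat \<Rightarrow> real) \<Rightarrow> (nat \<Rightarrow> real) \<Rightarrow> bool" where
  "cmils_feasible T N d r C x y \<longleftrightarrow>
     (\<forall>s\<in>{1..T}. y s \<in> {0, 1}) \<and>
     frac_assignment N r x \<and>
     (\<forall>i\<in>{1..N}. \<forall>s\<in>{1..r i}. x s i \<le> y s) \<and>
     (\<forall>s\<in>{1..T}. (\<Sum>i\<in>{i\<in>{1..N}. r i \<ge> s}. x s i * d i) \<le> y s * C s)"

definition hcost ::
  "nat \<Rightarrow> (nat \<Rightarrow> real) \<Rightarrow> (nat \<Rightarrow> nat) \<Rightarrow> (nat \<Rightarrow> nat \<Rightarrow> real) \<Rightarrow> (nat \<Rightarrow> nat \<Rightarrow> real) \<Rightarrow> real" where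
  "hcost N d r h x = (\<Sum>i\<in>{1..N}. d i * (\<Sum>s\<in>{1..r i}. x s i * h i s))"

text \<open>x_{[a],i}; the convention x_{s,i}=0 for s > r_i is built in.\<close>
definition xsum :: "(nat \<Rightarrow> nat) \<Rightarrow> (nat \<Rightarrow> nat \<Rightarrow> real) \<Rightarrow> nat set \<Rightarrow> nat \<Rightarrow> real" where
  "xsum r x S i = (\<Sum>s\<in>{s\<in>S. s \<le> r i}. x s i)"

definition Rab ::
  "nat \<Rightarrow> (nat \<Rightarrow> real) \<Rightarrow> (nat \<Rightarrow> nat) \<Rightarrow> (nat \<Rightarrow> nat \<Rightarrow> real) \<Rightarrow> nat \<Rightarrow> nat \<Rightarrow> real" where
  "Rab N d r x a b = (\<Sum>i\<in>{i\<in>{1..N}. r i \<in> {a<..b}}. max (1 - 5/2 * xsum r x {1..a} i) 0 * d i)"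

end

theory Submission
  imports Defs
begin

lemma abel:
  fixes z h :: "nat \<Rightarrow> real"
  shows "(\<Sum>s\<in>{1..n}. z s * h s) = (\<Sum>s\<in>{1..<n}. (\<Sum>t\<in>{1..s}. z t) * (h s - h (Suc s))) + (\<Sum>t\<in>{1..n}. z t) * h n"
proof (induction n)
  case 0
  then show ?case by simp
next
  case (Suc n)
  have e1: "{1..<Suc n} = (if n = 0 then {} else insert n {1..<n})" by auto
  show ?case
  proof (cases "n = 0")
    case True then show ?thesis by simp
  next
    case False
    then have "(\<Sum>s\<in>{1..<Suc n}. (\<Sum>t\<in>{1..s}. z t) * (h s - h (Suc s))) = (\<Sum>s\<in>{1..<n}. (\<Sum>t\<in>{1..s}. z t) * (h s - h (Suc s))) + (\<Sum>t\<in>{1..n}. z t) * (h n - h (Suc n))"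
      by (simp add: e1)
    then show ?thesis using Suc by (simp add: algebra_simps)
  qed
qed


lemma sched:
  fixes N T :: nat and d c :: "nat \<Rightarrow> real" and u :: "nat \<Rightarrow> nat \<Rightarrow> real"
    and m :: "nat \<Rightarrow> real" and r :: "nat \<Rightarrow> nat"
  assumes d: "\<And>i. i\<in>{1..N} \<Longrightarrow> d i \<ge> 0"
    and umono: "\<And>i s s'. i\<in>{1..N} \<Longrightarrow> s \<le> s' \<Longrightarrow> u i s \<le> u i s'"
    and u0: "\<And>i. i\<in>{1..N} \<Longrightarrow> u i 0 = 0"
    and mr: "\<And>i. i\<in>{1..N} \<Longrightarrow> 0 \<le> m i \<and> m i \<le> u i (r i) \<and> r i \<le> T"
    and hall: "\<And>a b. a < b \<Longrightarrow> b \<le> T \<Longrightarrow>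
      (\<Sum>i\<in>{i\<in>{1..N}. r i \<le> b}. max (m i - u i a) 0 * d i) \<le> (\<Sum>s\<in>{a<..b}. c s)"
  shows "\<exists>z. (\<forall>i\<in>{1..N}. (\<forall>s\<in>{1..r i}. 0 \<le> z s i) \<and> (\<Sum>s\<in>{1..r i}. z s i) = m i
             \<and> (\<forall>s\<le>r i. (\<Sum>t\<in>{1..s}. z t i) \<le> u i s))
           \<and> (\<forall>s\<in>{1..T}. (\<Sum>i\<in>{i\<in>{1..N}. s \<le> r i}. z s i * d i) \<le> c s)"
  using mr hall
proof (induction T arbitrary: m r)
  case 0
  have m0: "m i = 0" if "i\<in>{1..N}" for i
    using "0.prems"(1)[OF that] u0[OF that] by auto
  show ?case
  proof (intro exI[of _ "\<lambda>s i. 0"] conjI ballI allI impI)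
    fix i assume i: "i\<in>{1..N}"
    then have "r i = 0" using "0.prems"(1)[OF i] by auto
    then show "(\<Sum>s\<in>{1..r i}. (0::real)) = m i" using m0[OF i] by simp
    fix s assume "s \<le> r i"
    then show "(\<Sum>t\<in>{1..s}. (0::real)) \<le> u i s" using \<open>r i = 0\<close> u0[OF i] by simp
  qed auto
next
  case (Suc T')
  have uge0: "u i s \<ge> 0" if "i\<in>{1..N}" for i s using umono[OF that, of 0 s] u0[OF that] by simp
  define A where "A = {i\<in>{1..N}. r i = Suc T'}"
  define p where "p i t = max (m i - u i t) 0" for i t
  define P where "P t = (\<Sum>i\<in>A. p i t * d i)" for t
  define cT where "cT = c (Suc T')"
  have finA: "finite A" unfolding A_def by simp
  have Asub: "A \<subseteq> {1..N}" unfolding A_def by auto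
  have rle: "r i \<le> Suc T'" if "i \<in> {1..N}" for i using Suc.prems(1)[OF that] by simp
  have split: "{i\<in>{1..N}. r i \<le> Suc T'} = A \<union> {i\<in>{1..N}. r i \<le> T'}"
    unfolding A_def by auto
  have disj: "A \<inter> {i\<in>{1..N}. r i \<le> T'} = {}" unfolding A_def by auto
  have csplit: "(\<Sum>s\<in>{a<..Suc T'}. c s) = (\<Sum>s\<in>{a<..T'}. c s) + cT" if "a \<le> T'" for a
  proof -
    have "{a<..Suc T'} = insert (Suc T') {a<..T'}" using that by auto
    then show ?thesis unfolding cT_def by simp
  qed
  have pmono: "p i (Suc t) \<le> p i t" if "i \<in> A" for i t
    unfolding p_def using umono[of i t "Suc t"] that Asub by force
  have PT': "P T' \<le> cT"
  proof -
    have "P T' \<le> (\<Sum>i\<in>{i\<in>{1..N}. r i \<le> Suc T'}. p i T' * d i)"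
      unfolding P_def
      by (rule sum_mono2) (auto simp: A_def p_def intro!: mult_nonneg_nonneg d)
    also have "\<dots> \<le> (\<Sum>s\<in>{T'<..Suc T'}. c s)" using Suc.prems(2)[of T' "Suc T'"]
      unfolding p_def by simp
    also have "\<dots> = cT" using csplit[of T'] by simp
    finally show ?thesis .
  qed
  have W4gen: "(\<Sum>i\<in>A. max (m i - w i - u i a) 0 * d i) + (\<Sum>i\<in>{i\<in>{1..N}. r i \<le> T'}. p i a * d i)
       \<le> (\<Sum>s\<in>{a<..T'}. c s)"
    if hi: "\<And>i a. i \<in> A \<Longrightarrow> k \<le> a \<Longrightarrow> m i - w i \<le> u i a"
      and lo: "\<And>i a. i \<in> A \<Longrightarrow> a < k \<Longrightarrow> max (m i - w i - u i a) 0 = p i a - w i"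
      and sm: "0 < k \<Longrightarrow> (\<Sum>i\<in>A. w i * d i) = cT"
      and a: "a < T'" for w k a
  proof (cases "k \<le> a")
    case True
    have "(\<Sum>i\<in>A. max (m i - w i - u i a) 0 * d i) = 0"
      using hi[OF _ True] by (intro sum.neutral) auto
    then show ?thesis using Suc.prems(2)[of a T'] a unfolding p_def by simp
  next
    case False
    then have k: "0 < k" by simp
    have "(\<Sum>i\<in>A. max (m i - w i - u i a) 0 * d i) = (\<Sum>i\<in>A. p i a * d i - w i * d i)"
    proof (intro sum.cong refl)
      fix i assume "i \<in> A"
      then have "max (m i - w i - u i a) 0 = p i a - w i" using lo False by simp
      then show "max (m i - w i - u i a) 0 * d i = p i a * d i - w i * d i" by (simp add: left_diff_distrib)
    qed
    also have "\<dots> = (\<Sum>i\<in>A. p i a * d i) - cT" using sm[OF k] by (simp add: sum_subtractf)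
    finally have e: "(\<Sum>i\<in>A. max (m i - w i - u i a) 0 * d i) = (\<Sum>i\<in>A. p i a * d i) - cT" .
    have "(\<Sum>i\<in>{i\<in>{1..N}. r i \<le> Suc T'}. p i a * d i) = (\<Sum>i\<in>A. p i a * d i) + (\<Sum>i\<in>{i\<in>{1..N}. r i \<le> T'}. p i a * d i)"
      unfolding split by (rule sum.union_disjoint) (use finA disj in auto)
    moreover have "(\<Sum>i\<in>{i\<in>{1..N}. r i \<le> Suc T'}. p i a * d i) \<le> (\<Sum>s\<in>{a<..Suc T'}. c s)"
      using Suc.prems(2)[of a "Suc T'"] a unfolding p_def by simp
    ultimately show ?thesis using e csplit[of a] a by simp
  qed
  have "\<exists>w. (\<forall>i\<in>A. 0 \<le> w i \<and> w i \<le> m i \<and> m i - w i \<le> u i T') \<and> (\<Sum>i\<in>A. w i * d i) \<le> cT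
      \<and> (\<forall>a<T'. (\<Sum>i\<in>A. max (m i - w i - u i a) 0 * d i) + (\<Sum>i\<in>{i\<in>{1..N}. r i \<le> T'}. p i a * d i)
       \<le> (\<Sum>s\<in>{a<..T'}. c s))"
  proof -
    define t0 where "t0 = (LEAST t. P t \<le> cT)"
    have t0le: "t0 \<le> T'" unfolding t0_def using PT' by (rule Least_le)
    have Pt0: "P t0 \<le> cT" unfolding t0_def using PT' by (rule LeastI)
    show ?thesis
    proof (cases t0)
      case 0
      show ?thesis
      proof (intro exI[of _ m] conjI allI impI)
        show "\<forall>i\<in>A. 0 \<le> m i \<and> m i \<le> m i \<and> m i - m i \<le> u i T'" using uge0 Asub Suc.prems(1) by auto
      next
        show "(\<Sum>i\<in>A. m i * d i) \<le> cT" using Pt0 0 unfolding P_def p_def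
          using u0 Suc.prems(1) Asub by (smt (verit, ccfv_SIG) subset_iff sum.cong)
      next
        fix a assume "a < T'"
        show "(\<Sum>i\<in>A. max (m i - m i - u i a) 0 * d i) + (\<Sum>i\<in>{i\<in>{1..N}. r i \<le> T'}. p i a * d i)
         \<le> (\<Sum>s\<in>{a<..T'}. c s)"
          by (rule W4gen[where k=0]) (use uge0 Asub \<open>a < T'\<close> in auto)
      qed
    next
      case (Suc t)
      have Pt: "\<not> P t \<le> cT" using Suc unfolding t0_def
        by (metis lessI not_less_Least)
      have P1: "P (Suc t) \<le> cT" using Pt0 Suc by simp
      define lam where "lam = (cT - P (Suc t)) / (P t - P (Suc t))"
      have lam0: "0 \<le> lam" and lam1: "lam \<le> 1" using Pt P1 unfolding lam_def by auto
      define w where "w i = p i (Suc t) + lam * (p i t - p i (Suc t))" for i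
      have wlo: "p i (Suc t) \<le> w i" and whi: "w i \<le> p i t" if "i \<in> A" for i
      proof -
        have "0 \<le> p i t - p i (Suc t)" using pmono[OF that] by simp
        moreover have "lam * (p i t - p i (Suc t)) \<le> p i t - p i (Suc t)"
          using mult_right_mono[OF lam1 \<open>0 \<le> p i t - p i (Suc t)\<close>] by simp
        ultimately show "p i (Suc t) \<le> w i" "w i \<le> p i t" unfolding w_def using lam0
          by auto
      qed
      have sw: "(\<Sum>i\<in>A. w i * d i) = cT"
      proof -
        have "(\<Sum>i\<in>A. w i * d i) = (\<Sum>i\<in>A. p i (Suc t) * d i) + lam * ((\<Sum>i\<in>A. p i t * d i) - (\<Sum>i\<in>A. p i (Suc t) * d i))"
          unfolding w_def by (simp add: algebra_simps sum.distrib sum_distrib_left sum_subtractf)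
        also have "\<dots> = cT" unfolding lam_def P_def[symmetric] using Pt P1 by simp
        finally show ?thesis .
      qed
      show ?thesis
      proof (intro exI[of _ w] conjI ballI allI impI)
        fix i assume i: "i \<in> A"
        have im: "i \<in> {1..N}" using i Asub by auto
        show "0 \<le> w i" using wlo[OF i] unfolding p_def by simp
        show "w i \<le> m i" using whi[OF i] uge0[OF im, of t] Suc.prems(1)[OF im] unfolding p_def by (auto simp: max_def split: if_splits)
        show "m i - w i \<le> u i T'" using wlo[OF i] umono[OF im, of "Suc t" T'] t0le Suc
          unfolding p_def by simp
      next
        show "(\<Sum>i\<in>A. w i * d i) \<le> cT" using sw by simp
      next
        fix a assume a: "a < T'"
        show "(\<Sum>i\<in>A. max (m i - w i - u i a) 0 * d i) + (\<Sum>i\<in>{i\<in>{1..N}. r i \<le> T'}. p i a * d i)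
         \<le> (\<Sum>s\<in>{a<..T'}. c s)"
        proof (rule W4gen[where k="Suc t"])
          fix i b assume i: "i \<in> A" and b: "Suc t \<le> b"
          have im: "i \<in> {1..N}" using i Asub by auto
          show "m i - w i \<le> u i b" using wlo[OF i] umono[OF im b] unfolding p_def by simp
        next
          fix i b assume i: "i \<in> A" and b: "b < Suc t"
          have im: "i \<in> {1..N}" using i Asub by auto
          have ub: "u i b \<le> u i t" "u i t \<le> u i (Suc t)" using umono[OF im] b by auto
          show "max (m i - w i - u i b) 0 = p i b - w i"
          proof (cases "m i \<ge> u i b")
            case True
            then show ?thesis using whi[OF i] ub unfolding p_def by auto
          next
            case False
            then have "w i = 0" using wlo[OF i] whi[OF i] ub unfolding p_def by auto
            then show ?thesis using False unfolding p_def by auto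
          qed
        qed (use sw a in auto)
      qed
    qed
  qed
  then obtain w where w1: "\<And>i. i\<in>A \<Longrightarrow> 0 \<le> w i \<and> w i \<le> m i \<and> m i - w i \<le> u i T'"
    and w2: "(\<Sum>i\<in>A. w i * d i) \<le> cT"
    and w3: "\<And>a. a<T' \<Longrightarrow> (\<Sum>i\<in>A. max (m i - w i - u i a) 0 * d i) + (\<Sum>i\<in>{i\<in>{1..N}. r i \<le> T'}. p i a * d i)
       \<le> (\<Sum>s\<in>{a<..T'}. c s)" by blast
  define m' where "m' i = (if i \<in> A then m i - w i else m i)" for i
  define r' where "r' i = (if r i = Suc T' then T' else r i)" for i
  have h1: "0 \<le> m' i \<and> m' i \<le> u i (r' i) \<and> r' i \<le> T'" if i: "i\<in>{1..N}" for i
  proof (cases "i \<in> A")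
    case True
    then show ?thesis using w1[OF True] unfolding m'_def r'_def A_def by auto
  next
    case False
    then have "r i \<le> T'" using rle[OF i] i unfolding A_def by auto
    then show ?thesis using False Suc.prems(1)[OF i] unfolding m'_def r'_def by auto
  qed
  have h2: "(\<Sum>i\<in>{i\<in>{1..N}. r' i \<le> b}. max (m' i - u i a) 0 * d i) \<le> (\<Sum>s\<in>{a<..b}. c s)"
    if ab: "a < b" "b \<le> T'" for a b
  proof (cases "b < T'")
    case True
    have eq: "{i\<in>{1..N}. r' i \<le> b} = {i\<in>{1..N}. r i \<le> b}" unfolding r'_def using True by auto
    have "(\<Sum>i\<in>{i\<in>{1..N}. r' i \<le> b}. max (m' i - u i a) 0 * d i) = (\<Sum>i\<in>{i\<in>{1..N}. r i \<le> b}. max (m i - u i a) 0 * d i)"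
      unfolding eq using True by (intro sum.cong) (auto simp: m'_def A_def)
    then show ?thesis using Suc.prems(2)[of a b] ab by simp
  next
    case False
    then have b: "b = T'" using ab by simp
    have eq: "{i\<in>{1..N}. r' i \<le> b} = A \<union> {i\<in>{1..N}. r i \<le> T'}" unfolding r'_def A_def b
      using rle by auto
    have "(\<Sum>i\<in>{i\<in>{1..N}. r' i \<le> b}. max (m' i - u i a) 0 * d i) =
       (\<Sum>i\<in>A. max (m' i - u i a) 0 * d i) + (\<Sum>i\<in>{i\<in>{1..N}. r i \<le> T'}. max (m' i - u i a) 0 * d i)"
      unfolding eq by (rule sum.union_disjoint) (use finA disj in auto)
    also have "\<dots> = (\<Sum>i\<in>A. max (m i - w i - u i a) 0 * d i) + (\<Sum>i\<in>{i\<in>{1..N}. r i \<le> T'}. p i a * d i)"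
      by (intro arg_cong2[where f="(+)"] sum.cong) (auto simp: m'_def p_def A_def)
    also have "\<dots> \<le> (\<Sum>s\<in>{a<..b}. c s)" using w3[of a] ab b by simp
    finally show ?thesis .
  qed
  obtain z' where z'1: "\<And>i. i\<in>{1..N} \<Longrightarrow> (\<forall>s\<in>{1..r' i}. 0 \<le> z' s i) \<and> (\<Sum>s\<in>{1..r' i}. z' s i) = m' i
             \<and> (\<forall>s\<le>r' i. (\<Sum>t\<in>{1..s}. z' t i) \<le> u i s)"
    and z'2: "\<And>s. s\<in>{1..T'} \<Longrightarrow> (\<Sum>i\<in>{i\<in>{1..N}. s \<le> r' i}. z' s i * d i) \<le> c s"
    using Suc.IH[of m' r', OF h1 h2] by blast
  define z where "z s i = (if s = Suc T' then w i else z' s i)" for s i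
  have G1: "(\<forall>s\<in>{1..r i}. 0 \<le> z s i) \<and> (\<Sum>s\<in>{1..r i}. z s i) = m i
             \<and> (\<forall>s\<le>r i. (\<Sum>t\<in>{1..s}. z t i) \<le> u i s)" if i: "i \<in> {1..N}" for i
  proof (intro conjI allI impI)
    note zi = z'1[OF i]
    show "\<forall>s\<in>{1..r i}. 0 \<le> z s i"
    proof (cases "i \<in> A")
      case True
      then show ?thesis using zi w1[OF True] unfolding z_def r'_def A_def by auto
    next
      case False
      then have "r i \<le> T'" using rle[OF i] i unfolding A_def by auto
      then show ?thesis using zi False unfolding z_def r'_def A_def by auto
    qed
    show "(\<Sum>s\<in>{1..r i}. z s i) = m i"
    proof (cases "i \<in> A")
      case True
      then have ri: "r i = Suc T'" unfolding A_def by auto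
      have "(\<Sum>s\<in>{1..r i}. z s i) = z (Suc T') i + (\<Sum>s\<in>{1..T'}. z s i)" unfolding ri by simp
      also have "(\<Sum>s\<in>{1..T'}. z s i) = (\<Sum>s\<in>{1..T'}. z' s i)" unfolding z_def by simp
      finally show ?thesis using zi True ri unfolding z_def r'_def m'_def by simp
    next
      case False
      then have "r i \<le> T'" using rle[OF i] i unfolding A_def by auto
      then have "(\<Sum>s\<in>{1..r i}. z s i) = (\<Sum>s\<in>{1..r i}. z' s i)" unfolding z_def by (intro sum.cong) auto
      then show ?thesis using zi False \<open>r i \<le> T'\<close> unfolding r'_def m'_def by simp
    qed
    fix s assume s: "s \<le> r i"
    show "(\<Sum>t\<in>{1..s}. z t i) \<le> u i s"
    proof (cases "s = Suc T'")
      case True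
      then have ri: "r i = Suc T'" using s rle[OF i] by simp
      then have iA: "i \<in> A" using i unfolding A_def by simp
      have "(\<Sum>t\<in>{1..s}. z t i) = z (Suc T') i + (\<Sum>t\<in>{1..T'}. z t i)" unfolding True by simp
      also have "(\<Sum>t\<in>{1..T'}. z t i) = (\<Sum>t\<in>{1..T'}. z' t i)" unfolding z_def by simp
      finally have "(\<Sum>t\<in>{1..s}. z t i) = m i" using zi iA ri unfolding z_def r'_def m'_def by simp
      then show ?thesis using Suc.prems(1)[OF i] ri True by simp
    next
      case False
      then have sT: "s \<le> T'" using s rle[OF i] by simp
      have "s \<le> r' i" using s sT unfolding r'_def by auto
      moreover have "(\<Sum>t\<in>{1..s}. z t i) = (\<Sum>t\<in>{1..s}. z' t i)" unfolding z_def using sT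
        by (intro sum.cong) auto
      ultimately show ?thesis using zi by simp
    qed
  qed
  have G2: "(\<Sum>i\<in>{i\<in>{1..N}. s \<le> r i}. z s i * d i) \<le> c s" if s: "s \<in> {1..Suc T'}" for s
  proof -
    show "(\<Sum>i\<in>{i\<in>{1..N}. s \<le> r i}. z s i * d i) \<le> c s"
    proof (cases "s = Suc T'")
      case True
      have "{i\<in>{1..N}. s \<le> r i} = A" unfolding A_def True using rle by force
      then show ?thesis using w2 True unfolding z_def cT_def by simp
    next
      case False
      then have sT: "s \<in> {1..T'}" using s by auto
      have eq: "{i\<in>{1..N}. s \<le> r i} = {i\<in>{1..N}. s \<le> r' i}" unfolding r'_def using sT by auto
      show ?thesis unfolding eq using z'2[OF sT] False unfolding z_def by simp
    qed
  qed
  show ?case using G1 G2 by blast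
qed



lemma item_cost:
  fixes z x hh :: "nat \<Rightarrow> real" and u :: "nat \<Rightarrow> real" and n :: nat
  assumes hmono: "\<And>s. s \<in> {1..<n} \<Longrightarrow> hh (Suc s) \<le> hh s"
    and hn: "hh n = 0"
    and cum: "\<And>s. s \<in> {1..<n} \<Longrightarrow> (\<Sum>t\<in>{1..s}. z t) \<le> 5/2 * (\<Sum>t\<in>{1..s}. x t)"
  shows "(\<Sum>s\<in>{1..n}. z s * hh s) \<le> 5/2 * (\<Sum>s\<in>{1..n}. x s * hh s)"
proof -
  have "(\<Sum>s\<in>{1..n}. z s * hh s) = (\<Sum>s\<in>{1..<n}. (\<Sum>t\<in>{1..s}. z t) * (hh s - hh (Suc s)))"
    using abel[of z hh n] hn by simp
  also have "\<dots> \<le> (\<Sum>s\<in>{1..<n}. (5/2 * (\<Sum>t\<in>{1..s}. x t)) * (hh s - hh (Suc s)))"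
    by (intro sum_mono mult_right_mono cum) (use hmono in auto)
  also have "\<dots> = 5/2 * (\<Sum>s\<in>{1..<n}. (\<Sum>t\<in>{1..s}. x t) * (hh s - hh (Suc s)))"
    by (simp only: sum_distrib_left[of "5/2" "\<lambda>s. (\<Sum>t\<in>{1..s}. x t) * (hh s - hh (Suc s))" "{1..<n}"] mult.assoc)
  also have "(\<Sum>s\<in>{1..<n}. (\<Sum>t\<in>{1..s}. x t) * (hh s - hh (Suc s))) = (\<Sum>s\<in>{1..n}. x s * hh s)"
    using abel[of x hh n] hn by simp
  finally show ?thesis .
qed

theorem lemma1:
  fixes T N :: nat and d K C :: "nat \<Rightarrow> real" and r :: "nat \<Rightarrow> nat"
    and h x :: "nat \<Rightarrow> nat \<Rightarrow> real" and ystar :: "nat \<Rightarrow> real"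
  assumes inst: "cmils_instance T N d r K C h"
    and xfrac: "frac_assignment N r x"
    and ybin: "\<forall>s\<in>{1..T}. ystar s \<in> {0, 1}"
    and cover: "\<forall>a b. a < b \<and> b \<le> T \<longrightarrow>
        (\<Sum>s\<in>{s\<in>{1..T}. ystar s = 1} \<inter> {a<..b}. C s) \<ge> Rab N d r x a b"
  shows "\<exists>xstar. cmils_feasible T N d r C xstar ystar \<and>
           hcost N d r h xstar \<le> 5/2 * hcost N d r h x"
proof -
  have dpos: "\<And>i. i\<in>{1..N} \<Longrightarrow> d i > 0" and rT: "\<And>i. i\<in>{1..N} \<Longrightarrow> r i \<in> {1..T}"
    and Cpos: "\<And>s. s\<in>{1..T} \<Longrightarrow> C s > 0"
    and hm: "\<And>i s s'. i\<in>{1..N} \<Longrightarrow> s\<in>{1..r i} \<Longrightarrow> s'\<in>{1..r i} \<Longrightarrow> s \<le> s' \<Longrightarrow> h i s' \<le> h i s"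
    and hr: "\<And>i. i\<in>{1..N} \<Longrightarrow> h i (r i) = 0"
    using inst unfolding cmils_instance_def by auto
  have x01: "\<And>i s. i\<in>{1..N} \<Longrightarrow> s\<in>{1..r i} \<Longrightarrow> 0 \<le> x s i"
    and xs1: "\<And>i. i\<in>{1..N} \<Longrightarrow> (\<Sum>s\<in>{1..r i}. x s i) = 1"
    using xfrac unfolding frac_assignment_def by auto
  define u where "u i s = min 1 (5/2 * xsum r x {1..s} i)" for i s
  define c where "c s = ystar s * C s" for s
  have xsum_le: "xsum r x {1..s} i = (\<Sum>t\<in>{1..s}. x t i)" if "s \<le> r i" for s i
    unfolding xsum_def by (rule sum.cong) (use that in auto)
  have xsum_ge: "xsum r x {1..s} i = 1" if "r i \<le> s" "i\<in>{1..N}" for s i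
  proof -
    have "{t\<in>{1..s}. t \<le> r i} = {1..r i}" using that by auto
    then show ?thesis unfolding xsum_def using xs1[OF that(2)] by simp
  qed
  have umono: "u i s \<le> u i s'" if "i\<in>{1..N}" "s \<le> s'" for i s s'
  proof -
    have "xsum r x {1..s} i \<le> xsum r x {1..s'} i"
      unfolding xsum_def by (rule sum_mono2) (use that x01 in auto)
    then show ?thesis unfolding u_def by (auto simp: min_def)
  qed
  have u0: "u i 0 = 0" for i unfolding u_def xsum_def by simp
  have mr: "0 \<le> (1::real) \<and> 1 \<le> u i (r i) \<and> r i \<le> T" if "i\<in>{1..N}" for i
    using xsum_ge[of i "r i"] that rT[OF that] unfolding u_def by auto
  have hall: "(\<Sum>i\<in>{i\<in>{1..N}. r i \<le> b}. max (1 - u i a) 0 * d i) \<le> (\<Sum>s\<in>{a<..b}. c s)"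
    if ab: "a < b" "b \<le> T" for a b
  proof -
    have "(\<Sum>i\<in>{i\<in>{1..N}. r i \<le> b}. max (1 - u i a) 0 * d i)
        = (\<Sum>i\<in>{i\<in>{1..N}. r i \<in> {a<..b}}. max (1 - u i a) 0 * d i)"
    proof (rule sum.mono_neutral_right)
      show "\<forall>i\<in>{i\<in>{1..N}. r i \<le> b} - {i\<in>{1..N}. r i \<in> {a<..b}}. max (1 - u i a) 0 * d i = 0"
      proof
        fix i assume i: "i \<in> {i\<in>{1..N}. r i \<le> b} - {i\<in>{1..N}. r i \<in> {a<..b}}"
        then have "r i \<le> a" "i \<in> {1..N}" by auto
        then have "xsum r x {1..a} i = 1" using xsum_ge by blast
        then show "max (1 - u i a) 0 * d i = 0" unfolding u_def by simp
      qed
    qed auto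
    also have "\<dots> = Rab N d r x a b" unfolding Rab_def u_def
      by (rule sum.cong) (auto simp: max_def min_def)
    also have "\<dots> \<le> (\<Sum>s\<in>{s\<in>{1..T}. ystar s = 1} \<inter> {a<..b}. C s)" using cover ab by auto
    also have "{s\<in>{1..T}. ystar s = 1} \<inter> {a<..b} = {s\<in>{a<..b}. ystar s = 1}" using ab by auto
    also have "(\<Sum>s\<in>{s\<in>{a<..b}. ystar s = 1}. C s) = (\<Sum>s\<in>{a<..b}. if ystar s = 1 then C s else 0)"
      by (rule sum.inter_filter) simp
    also have "\<dots> = (\<Sum>s\<in>{a<..b}. c s)" unfolding c_def
    proof (rule sum.cong)
      fix s assume "s \<in> {a<..b}"
      then have "ystar s \<in> {0,1}" using ybin ab by auto
      then show "(if ystar s = 1 then C s else 0) = ystar s * C s" by auto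
    qed simp
    finally show ?thesis .
  qed
  have dge: "\<And>i. i\<in>{1..N} \<Longrightarrow> d i \<ge> 0" using dpos less_imp_le by blast
  have "\<exists>z. (\<forall>i\<in>{1..N}. (\<forall>s\<in>{1..r i}. 0 \<le> z s i) \<and> (\<Sum>s\<in>{1..r i}. z s i) = 1
             \<and> (\<forall>s\<le>r i. (\<Sum>t\<in>{1..s}. z t i) \<le> u i s))
           \<and> (\<forall>s\<in>{1..T}. (\<Sum>i\<in>{i\<in>{1..N}. s \<le> r i}. z s i * d i) \<le> c s)"
    by (rule sched[where m="\<lambda>_. 1", OF dge umono u0 mr hall])
  then obtain z where zz: "(\<forall>i\<in>{1..N}. (\<forall>s\<in>{1..r i}. 0 \<le> z s i) \<and> (\<Sum>s\<in>{1..r i}. z s i) = 1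
             \<and> (\<forall>s\<le>r i. (\<Sum>t\<in>{1..s}. z t i) \<le> u i s))
           \<and> (\<forall>s\<in>{1..T}. (\<Sum>i\<in>{i\<in>{1..N}. s \<le> r i}. z s i * d i) \<le> c s)" by (elim exE)
  have z1: "\<And>i. i\<in>{1..N} \<Longrightarrow> (\<forall>s\<in>{1..r i}. 0 \<le> z s i) \<and> (\<Sum>s\<in>{1..r i}. z s i) = 1
             \<and> (\<forall>s\<le>r i. (\<Sum>t\<in>{1..s}. z t i) \<le> u i s)" using zz by blast
  have z2: "\<And>s. s\<in>{1..T} \<Longrightarrow> (\<Sum>i\<in>{i\<in>{1..N}. s \<le> r i}. z s i * d i) \<le> c s" using zz by blast
  have z0: "0 \<le> z s i" if "i\<in>{1..N}" "s\<in>{1..r i}" for i s using z1 that by auto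
  have zle1: "z s i \<le> 1" if i: "i\<in>{1..N}" and s: "s\<in>{1..r i}" for i s
  proof -
    have "z s i \<le> (\<Sum>t\<in>{1..r i}. z t i)" by (rule member_le_sum) (use z0 i s in auto)
    then show ?thesis using z1[OF i] by simp
  qed
  have zy: "z s i \<le> ystar s" if i: "i\<in>{1..N}" and s: "s\<in>{1..r i}" for i s
  proof -
    have sT: "s \<in> {1..T}" using s rT[OF i] by auto
    show ?thesis
    proof (cases "ystar s = 1")
      case True then show ?thesis using zle1[OF i s] by simp
    next
      case False
      then have y0: "ystar s = 0" using ybin sT by auto
      have "z s i * d i \<le> (\<Sum>i\<in>{i\<in>{1..N}. s \<le> r i}. z s i * d i)"
        by (rule member_le_sum) (use i s in \<open>auto intro!: mult_nonneg_nonneg z0 dge\<close>)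
      also have "\<dots> \<le> 0" using z2[OF sT] y0 unfolding c_def by simp
      finally have "z s i * d i \<le> 0" .
      then have "z s i \<le> 0" using dpos[OF i] by (simp add: mult_le_0_iff)
      then show ?thesis using y0 by simp
    qed
  qed
  have feas: "cmils_feasible T N d r C z ystar"
    unfolding cmils_feasible_def frac_assignment_def
  proof (intro conjI ballI)
    show "\<And>s. s \<in> {1..T} \<Longrightarrow> ystar s \<in> {0, 1}" using ybin by auto
    show "\<And>i s. i \<in> {1..N} \<Longrightarrow> s \<in> {1..r i} \<Longrightarrow> 0 \<le> z s i" using z0 by auto
    show "\<And>i s. i \<in> {1..N} \<Longrightarrow> s \<in> {1..r i} \<Longrightarrow> z s i \<le> 1" using zle1 by auto
    show "\<And>i. i \<in> {1..N} \<Longrightarrow> (\<Sum>s\<in>{1..r i}. z s i) = 1" using z1 by auto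
    show "\<And>i s. i \<in> {1..N} \<Longrightarrow> s \<in> {1..r i} \<Longrightarrow> z s i \<le> ystar s" using zy by auto
    show "\<And>s. s \<in> {1..T} \<Longrightarrow> (\<Sum>i\<in>{i \<in> {1..N}. s \<le> r i}. z s i * d i) \<le> ystar s * C s"
      using z2 unfolding c_def by auto
  qed
  have item: "(\<Sum>s\<in>{1..r i}. z s i * h i s) \<le> 5/2 * (\<Sum>s\<in>{1..r i}. x s i * h i s)" if i: "i\<in>{1..N}" for i
  proof (rule item_cost[where hh="h i" and z="\<lambda>s. z s i" and x="\<lambda>s. x s i"])
    show "h i (r i) = 0" using hr[OF i] .
    fix s assume s: "s \<in> {1..<r i}"
    show "h i (Suc s) \<le> h i s" using hm[OF i, of s "Suc s"] s by auto
    have "(\<Sum>t\<in>{1..s}. z t i) \<le> u i s" using z1[OF i] s by auto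
    also have "\<dots> \<le> 5/2 * xsum r x {1..s} i" unfolding u_def by simp
    also have "xsum r x {1..s} i = (\<Sum>t\<in>{1..s}. x t i)" using xsum_le[of s i] s by simp
    finally show "(\<Sum>t\<in>{1..s}. z t i) \<le> 5/2 * (\<Sum>t\<in>{1..s}. x t i)" .
  qed
  have "hcost N d r h z \<le> (\<Sum>i\<in>{1..N}. d i * (5/2 * (\<Sum>s\<in>{1..r i}. x s i * h i s)))"
    unfolding hcost_def by (intro sum_mono mult_left_mono item) (use dpos in \<open>auto intro: less_imp_le\<close>)
  also have "\<dots> = 5/2 * hcost N d r h x" unfolding hcost_def
    by (simp add: sum_distrib_left algebra_simps)
  finally show ?thesis using feas by blast
qed

end
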